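(* For $N\in\mathbb N$ let $S_N=1+\frac{N+1}{2N}$, $x_{N,k}=\frac{k}{N^2}$ and $\lambda_{N,k}=\frac{1}{S_N}\left(1+\frac kN\right)\frac1N$ for $k=1,\dots,N$. Let $V_{N,1},\dots,V_{N,N}$ solve the deterministic system $$\frac{d}{dt}V_{N,k}(t)=\sum_{j\neq k}\frac{2(\lambda_{N,k}+\lambda_{N,j})}{V_{N,k}(t)-V_{N,j}(t)},\qquad V_{N,k}(0)=x_{N,k},$$ and let $\alpha_{N,t}=\sum_{k=1}^N\lambda_{N,k}\delta_{V_{N,k}(t)}$. Then there exists $f\in C^2_b(\mathbb R,\mathbb C)$ such that the sequence $\left(\frac{d}{dt}\int_{\mathbb R}f(x)\,d\alpha_{N,t}(x)\Big|_{t=0}\right)_{N\in\mathbb N}$ is unbounded.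
   Context: $C^2_b(\mathbb R,\mathbb C)$ denotes the twice continuously differentiable functions $f:\mathbb R\to\mathbb C$ with $f,f',f''$ bounded. $\delta_x$ is the unit point mass at $x$. *)

theory Defs
  imports "HOL-Analysis.Analysis"
begin

definition C2b :: "(real \<Rightarrow> complex) \<Rightarrow> bool" where
  "C2b f \<longleftrightarrow> (\<exists>f' f''.
      (\<forall>x. (f has_vector_derivative f' x) (at x)) \<and>
      (\<forall>x. (f' has_vector_derivative f'' x) (at x)) \<and>
      continuous_on UNIV f'' \<and>
      bounded (range f) \<and> bounded (range f') \<and> bounded (range f''))"

definition S_N :: "nat \<Rightarrow> real" where
  "S_N N = 1 + (real N + 1) / (2 * real N)"

definition x_N :: "nat \<Rightarrow> nat \<Rightarrow> real" where
  "x_N N k = real k / (real N)^2"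

definition lam_N :: "nat \<Rightarrow> nat \<Rightarrow> real" where
  "lam_N N k = (1 / S_N N) * (1 + real k / real N) * (1 / real N)"

end

theory Submission
  imports Defs
begin


lemma pair_abs:
  fixes lk lj xk xj S ck cj L :: real
  assumes "xk \<noteq> xj" "lk - lj = (xk - xj) / S" "\<bar>ck - cj\<bar> \<le> \<bar>xk - xj\<bar>"
    "ck \<ge> 1/2" "0 < S" "S \<le> 2" "0 \<le> lj" "lj \<le> 1/8" "lk + lj \<ge> L" "L \<ge> 0"
  shows "lk * (ck * (2 * (lk + lj) / (xk - xj))) + lj * (cj * (2 * (lj + lk) / (xj - xk))) \<ge> L / 4"
proof -
  have e: "lk * (ck * (2 * (lk + lj) / (xk - xj))) + lj * (cj * (2 * (lj + lk) / (xj - xk)))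
      = 2 * (lk + lj) * (ck / S + lj * ((ck - cj) / (xk - xj)))"
  proof -
    have d: "xk - xj \<noteq> 0" "xj - xk \<noteq> 0" using assms(1) by auto
    have l: "lk = lj + (xk - xj) / S" using assms(2) by simp
    have a1: "lk * (ck * (2 * (lk + lj) / (xk - xj))) + lj * (cj * (2 * (lj + lk) / (xj - xk)))
      = 2 * (lk + lj) * ((lk * ck - lj * cj) / (xk - xj))"
    proof -
      have m: "2 * (lj + lk) / (xj - xk) = - (2 * (lk + lj) / (xk - xj))"
        by (metis add.commute divide_minus_right minus_diff_eq)
      have g: "\<And>A. lk * (ck * A) + lj * (cj * (- A)) = A * (lk * ck - lj * cj)"
        by (simp add: algebra_simps)
      have "lk * (ck * (2 * (lk + lj) / (xk - xj))) + lj * (cj * (- (2 * (lk + lj) / (xk - xj))))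
          = (2 * (lk + lj) / (xk - xj)) * (lk * ck - lj * cj)"
        using g[of "2 * (lk + lj) / (xk - xj)"] .
      also have "\<dots> = 2 * (lk + lj) * ((lk * ck - lj * cj) / (xk - xj))" by simp
      finally show ?thesis unfolding m .
    qed
    have a2: "lk * ck - lj * cj = (xk - xj) * (ck / S) + lj * (ck - cj)"
      unfolding l using assms(5) by (simp add: field_simps)
    have a3: "(lk * ck - lj * cj) / (xk - xj) = ck / S + lj * ((ck - cj) / (xk - xj))"
      unfolding a2 using d by (simp add: field_simps)
    show ?thesis unfolding a1 a3 ..
  qed
  have q: "\<bar>(ck - cj) / (xk - xj)\<bar> \<le> 1"
    using assms(1,3) by (simp add: abs_divide divide_le_eq_1)
  have "lj * ((ck - cj) / (xk - xj)) \<ge> - lj"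
  proof -
    have "\<bar>lj * ((ck - cj) / (xk - xj))\<bar> \<le> lj * 1"
      unfolding abs_mult using q assms(7) mult_left_mono[OF q assms(7)] by simp
    then show ?thesis using abs_le_D2[of "lj * ((ck - cj) / (xk - xj))" "lj * 1"] by linarith
  qed
  moreover have "ck / S \<ge> 1/4"
  proof -
    have "ck / S \<ge> ck / 2" using assms(4,5,6) by (intro divide_left_mono) auto
    then show ?thesis using assms(4) by linarith
  qed
  ultimately have "ck / S + lj * ((ck - cj) / (xk - xj)) \<ge> 1/8" using assms(8) by linarith
  hence "2 * (lk + lj) * (ck / S + lj * ((ck - cj) / (xk - xj))) \<ge> 2 * L * (1/8)"
    using assms(9,10) by (intro mult_mono) auto
  then show ?thesis using e by simp
qed

lemma cos_lip: "\<bar>cos (a::real) - cos b\<bar> \<le> \<bar>a - b\<bar>"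
proof -
  have "\<bar>cos a - cos b\<bar> = 2 * \<bar>sin ((a+b)/2)\<bar> * \<bar>sin ((b-a)/2)\<bar>"
    by (simp add: cos_diff_cos abs_mult)
  also have "\<dots> \<le> 2 * 1 * \<bar>(b-a)/2\<bar>"
    by (intro mult_mono abs_sin_x_le_abs_x) auto
  finally show ?thesis by simp
qed

lemma cos_half: assumes "0 \<le> (x::real)" "x \<le> 1" shows "cos x \<ge> 1/2"
proof -
  have "cos (pi/3) \<le> cos x" using assms pi_gt3 by (intro cos_monotone_0_pi_le) auto
  then show ?thesis by (simp add: cos_60)
qed

lemma S_bounds: assumes "N \<ge> 1" shows "1 \<le> S_N N" "S_N N \<le> 2"
proof -
  have p: "real N > 0" using assms by simp
  have "(real N + 1) / (2 * real N) \<le> 1" using assms p by (simp add: divide_le_eq_1)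
  moreover have "(real N + 1) / (2 * real N) \<ge> 0" using p by simp
  ultimately show "1 \<le> S_N N" "S_N N \<le> 2" unfolding S_N_def by linarith+
qed

lemma lam_bounds: assumes "N \<ge> 1" "k \<le> N"
  shows "lam_N N k \<ge> 1 / (2 * real N)" "lam_N N k \<le> 2 / real N"
proof -
  have p: "real N > 0" using assms by simp
  note S = S_bounds[OF assms(1)]
  have q0: "0 \<le> real k / real N" using p by simp
  have q1: "real k / real N \<le> 1" using assms p by (simp add: divide_le_eq_1)
  have a: "1 / S_N N \<ge> 1/2" using S by (simp add: le_divide_eq)
  have b: "1 / S_N N \<le> 1" using S by simp
  have b0: "1 / S_N N \<ge> 0" using S by (simp add: zero_le_divide_iff)
  have "(1 / S_N N) * (1 + real k / real N) \<ge> (1/2) * 1"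
    using a q0 b0 by (intro mult_mono) auto
  then have "(1 / S_N N) * (1 + real k / real N) * (1 / real N) \<ge> (1/2) * (1 / real N)"
    using p by (intro mult_right_mono) auto
  then show "lam_N N k \<ge> 1 / (2 * real N)" unfolding lam_N_def by simp
  have "(1 / S_N N) * (1 + real k / real N) \<le> 1 * 2"
    using b b0 q1 q0 by (intro mult_mono) auto
  then have "(1 / S_N N) * (1 + real k / real N) * (1 / real N) \<le> 2 * (1 / real N)"
    using p by (intro mult_right_mono) auto
  then show "lam_N N k \<le> 2 / real N" unfolding lam_N_def by simp
qed

lemma lam_diff: assumes "N \<ge> 1"
  shows "lam_N N k - lam_N N j = (x_N N k - x_N N j) / S_N N"
proof -
  have p: "real N > 0" using assms by simp
  have S: "S_N N > 0" using S_bounds[OF assms] by simp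
  show ?thesis unfolding lam_N_def x_N_def using p S by (simp add: field_simps power2_eq_square)
qed

lemma x_range: assumes "N \<ge> 1" "k \<le> N" shows "0 \<le> x_N N k" "x_N N k \<le> 1"
proof -
  have p: "real N > 0" using assms by simp
  have "real k \<le> real N * real N" using assms
    by (metis le_trans mult_le_mono2 mult_1_right of_nat_le_iff of_nat_mult)
  then show "x_N N k \<le> 1" unfolding x_N_def using p by (simp add: power2_eq_square divide_le_eq_1)
  show "0 \<le> x_N N k" unfolding x_N_def by simp
qed

lemma x_inj: assumes "N \<ge> 1" "k \<noteq> j" shows "x_N N k \<noteq> x_N N j"
  using assms unfolding x_N_def by (simp add: divide_cancel_right)

lemma pair_bound:
  assumes N: "N \<ge> 16" and k: "k \<in> {1..N}" and j: "j \<in> {1..N}" and kj: "k \<noteq> j"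
  shows "lam_N N k * (cos (x_N N k) * (2 * (lam_N N k + lam_N N j) / (x_N N k - x_N N j)))
       + lam_N N j * (cos (x_N N j) * (2 * (lam_N N j + lam_N N k) / (x_N N j - x_N N k)))
       \<ge> (1 / real N) / 4"
proof -
  have N1: "N \<ge> 1" using N by simp
  have p: "real N \<ge> 16" using N by simp
  have lj: "lam_N N j \<le> 1/8"
  proof -
    have "lam_N N j \<le> 2 / real N" using lam_bounds[OF N1] j by auto
    also have "\<dots> \<le> 1/8" using p by (simp add: divide_le_eq)
    finally show ?thesis .
  qed
  have lsum: "lam_N N k + lam_N N j \<ge> 1 / real N"
  proof -
    have "lam_N N k \<ge> 1 / (2 * real N)" "lam_N N j \<ge> 1 / (2 * real N)"
      using lam_bounds[OF N1] j k by auto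
    then show ?thesis by simp
  qed
  have lj0: "0 \<le> lam_N N j" using lam_bounds[OF N1] j p
    by (smt (verit) atLeastAtMost_iff divide_nonneg_nonneg of_nat_0_le_iff)
  have S1: "0 < S_N N" "S_N N \<le> 2" using S_bounds[OF N1] by auto
  have ck: "1/2 \<le> cos (x_N N k)" using cos_half x_range[OF N1] k by simp
  show ?thesis
    by (rule pair_abs[OF x_inj[OF N1 kj] lam_diff[OF N1] cos_lip ck S1 lj0 lj lsum]) simp
qed

lemma R_bound:
  assumes N: "N \<ge> 16"
  shows "(\<Sum>k=1..N. lam_N N k * (cos (x_N N k) *
            (\<Sum>j\<in>{1..N} - {k}. 2 * (lam_N N k + lam_N N j) / (x_N N k - x_N N j))))
         \<ge> (real N - 1) / 8"
proof -
  define F where "F k j = lam_N N k * (cos (x_N N k) * (2 * (lam_N N k + lam_N N j) / (x_N N k - x_N N j)))" for k j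
  have p: "real N > 0" using N by simp
  have R: "(\<Sum>k=1..N. lam_N N k * (cos (x_N N k) *
            (\<Sum>j\<in>{1..N} - {k}. 2 * (lam_N N k + lam_N N j) / (x_N N k - x_N N j))))
        = (\<Sum>k=1..N. \<Sum>j\<in>{j. j \<in> {1..N} \<and> k \<noteq> j}. F k j)"
  proof (rule sum.cong[OF refl])
    fix k assume "k \<in> {1..N}"
    have e: "{1..N} - {k} = {j. j \<in> {1..N} \<and> k \<noteq> j}" by auto
    show "lam_N N k * (cos (x_N N k) *
            (\<Sum>j\<in>{1..N} - {k}. 2 * (lam_N N k + lam_N N j) / (x_N N k - x_N N j)))
        = (\<Sum>j\<in>{j. j \<in> {1..N} \<and> k \<noteq> j}. F k j)"
      unfolding e F_def by (simp add: sum_distrib_left)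
  qed
  have sw: "(\<Sum>k=1..N. \<Sum>j\<in>{j. j \<in> {1..N} \<and> k \<noteq> j}. F k j)
      = (\<Sum>j=1..N. \<Sum>k\<in>{k. k \<in> {1..N} \<and> k \<noteq> j}. F k j)"
    by (rule sum.swap_restrict) auto
  have sw2: "(\<Sum>j=1..N. \<Sum>k\<in>{k. k \<in> {1..N} \<and> k \<noteq> j}. F k j)
      = (\<Sum>k=1..N. \<Sum>j\<in>{j. j \<in> {1..N} \<and> k \<noteq> j}. F j k)"
    by (rule sum.cong[OF refl], rule sum.cong) auto
  have "2 * (\<Sum>k=1..N. \<Sum>j\<in>{j. j \<in> {1..N} \<and> k \<noteq> j}. F k j)
      = (\<Sum>k=1..N. \<Sum>j\<in>{j. j \<in> {1..N} \<and> k \<noteq> j}. F k j + F j k)"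
    using sw sw2 by (simp add: sum.distrib)
  also have "\<dots> \<ge> (\<Sum>k=1..N. \<Sum>j\<in>{j. j \<in> {1..N} \<and> k \<noteq> j}. (1 / real N) / 4)"
    apply (intro sum_mono)
    unfolding F_def using pair_bound[OF N] by auto
  moreover have "(\<Sum>k=1..N. \<Sum>j\<in>{j. j \<in> {1..N} \<and> k \<noteq> j}. (1 / real N) / 4 :: real)
      = (real N - 1) / 4"
  proof -
    have c: "card {j. j \<in> {1..N} \<and> k \<noteq> j} = N - 1" if "k \<in> {1..N}" for k
    proof -
      have "{j. j \<in> {1..N} \<and> k \<noteq> j} = {1..N} - {k}" by auto
      then show ?thesis using that by simp
    qed
    have "(\<Sum>k=1..N. \<Sum>j\<in>{j. j \<in> {1..N} \<and> k \<noteq> j}. (1 / real N) / 4 :: real)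
        = (\<Sum>k=1..N. real (N - 1) * ((1 / real N) / 4))"
    proof (rule sum.cong[OF refl])
      fix k assume k: "k \<in> {1..N}"
      show "(\<Sum>j\<in>{j. j \<in> {1..N} \<and> k \<noteq> j}. (1 / real N) / 4 :: real)
          = real (N - 1) * ((1 / real N) / 4)"
        by (simp only: sum_constant c[OF k])
    qed
    also have "\<dots> = real N * (real (N - 1) * ((1 / real N) / 4))" by simp
    also have "\<dots> = (real N - 1) / 4" using p N by (simp add: of_nat_diff)
    finally show ?thesis .
  qed
  ultimately show ?thesis using R by linarith
qed

theorem mainTheorem3:
  fixes V :: "nat \<Rightarrow> nat \<Rightarrow> real \<Rightarrow> real" and T :: "nat \<Rightarrow> real"
  assumes T_pos: "\<And>N. N \<ge> 1 \<Longrightarrow> T N > 0"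
    and init: "\<And>N k. N \<ge> 1 \<Longrightarrow> k \<in> {1..N} \<Longrightarrow> V N k 0 = x_N N k"
    and ode: "\<And>N k t. N \<ge> 1 \<Longrightarrow> k \<in> {1..N} \<Longrightarrow> t \<in> {0..<T N} \<Longrightarrow>
       (V N k has_real_derivative
          (\<Sum>j\<in>{1..N} - {k}. 2 * (lam_N N k + lam_N N j) / (V N k t - V N j t)))
         (at t within {0..<T N})"
  shows "\<exists>f. C2b f \<and> (\<exists>D :: nat \<Rightarrow> complex.
           (\<forall>N\<ge>1. ((\<lambda>t. \<Sum>k=1..N. complex_of_real (lam_N N k) * f (V N k t))
                      has_vector_derivative D N) (at 0 within {0..<T N})) \<and>
           \<not> bounded (D ` {1..}))"
proof -
  define R where "R N = (\<Sum>k=1..N. lam_N N k * (cos (x_N N k) *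
            (\<Sum>j\<in>{1..N} - {k}. 2 * (lam_N N k + lam_N N j) / (x_N N k - x_N N j))))" for N
  define f where "f x = complex_of_real (sin x)" for x
  have C: "C2b f"
    unfolding C2b_def
  proof (intro exI conjI allI)
    show "(f has_vector_derivative complex_of_real (cos x)) (at x)" for x
      unfolding f_def by (intro has_vector_derivative_of_real DERIV_sin)
    show "((\<lambda>x. complex_of_real (cos x)) has_vector_derivative complex_of_real (- sin x)) (at x)" for x
      by (intro has_vector_derivative_of_real DERIV_cos)
    show "continuous_on UNIV (\<lambda>x. complex_of_real (- sin x))"
      by (intro continuous_intros)
    show "bounded (range f)" unfolding bounded_iff f_def
      by (intro exI[of _ 1]) auto
    show "bounded (range (\<lambda>x. complex_of_real (cos x)))" unfolding bounded_iff
      by (intro exI[of _ 1]) auto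
    show "bounded (range (\<lambda>x. complex_of_real (- sin x)))" unfolding bounded_iff
      by (intro exI[of _ 1]) auto
  qed
  have Dv: "((\<lambda>t. \<Sum>k=1..N. complex_of_real (lam_N N k) * f (V N k t))
                      has_vector_derivative complex_of_real (R N)) (at 0 within {0..<T N})"
    if N: "N \<ge> 1" for N
  proof -
    have t0: "(0::real) \<in> {0..<T N}" using T_pos[OF N] by simp
    have e: "(\<lambda>t. \<Sum>k=1..N. complex_of_real (lam_N N k) * f (V N k t))
        = (\<lambda>t. complex_of_real (\<Sum>k=1..N. lam_N N k * sin (V N k t)))"
      unfolding f_def by simp
    have "((\<lambda>t. \<Sum>k=1..N. lam_N N k * sin (V N k t)) has_real_derivative R N) (at 0 within {0..<T N})"
      unfolding R_def
    proof (rule DERIV_sum)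
      fix k assume k: "k \<in> {1..N}"
      have s: "(\<Sum>j\<in>{1..N} - {k}. 2 * (lam_N N k + lam_N N j) / (V N k 0 - V N j 0))
          = (\<Sum>j\<in>{1..N} - {k}. 2 * (lam_N N k + lam_N N j) / (x_N N k - x_N N j))"
        using init[OF N] k by (intro sum.cong) auto
      have "((\<lambda>t. sin (V N k t)) has_real_derivative cos (V N k 0) *
          (\<Sum>j\<in>{1..N} - {k}. 2 * (lam_N N k + lam_N N j) / (V N k 0 - V N j 0))) (at 0 within {0..<T N})"
        by (rule DERIV_chain2[OF DERIV_sin ode[OF N k t0]])
      then have "((\<lambda>t. lam_N N k * sin (V N k t)) has_real_derivative lam_N N k * (cos (V N k 0) *
          (\<Sum>j\<in>{1..N} - {k}. 2 * (lam_N N k + lam_N N j) / (V N k 0 - V N j 0)))) (at 0 within {0..<T N})"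
        by (rule DERIV_cmult)
      then show "((\<lambda>t. lam_N N k * sin (V N k t)) has_real_derivative lam_N N k * (cos (x_N N k) *
          (\<Sum>j\<in>{1..N} - {k}. 2 * (lam_N N k + lam_N N j) / (x_N N k - x_N N j)))) (at 0 within {0..<T N})"
        unfolding s unfolding init[OF N k] .
    qed
    then show ?thesis unfolding e by (rule has_vector_derivative_of_real)
  qed
  have unb: "\<not> bounded ((\<lambda>N. complex_of_real (R N)) ` {1..})"
  proof
    assume "bounded ((\<lambda>N. complex_of_real (R N)) ` {1..})"
    then obtain B where B: "\<And>N. N \<ge> 1 \<Longrightarrow> norm (complex_of_real (R N)) \<le> B"
      unfolding bounded_iff by auto
    define N where "N = nat (ceiling (8 * \<bar>B\<bar>)) + 16"
    have N16: "N \<ge> 16" unfolding N_def by simp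
    have "real N \<ge> 8 * \<bar>B\<bar> + 16" unfolding N_def
      by (metis add.commute add_mono_thms_linordered_semiring(3) le_nat_iff of_nat_add of_nat_numeral real_nat_ceiling_ge)
    then have big: "(real N - 1) / 8 > \<bar>B\<bar>" by simp
    have r: "R N \<ge> (real N - 1) / 8" unfolding R_def by (rule R_bound[OF N16])
    have "norm (complex_of_real (R N)) \<le> B" using B N16 by simp
    then show False using r big by simp
  qed
  show ?thesis
    apply (rule exI[of _ f])
    apply (intro conjI C exI[of _ "\<lambda>N. complex_of_real (R N)"])
    using Dv unb by auto
qed

end
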